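(* For all $p,q\in[1,\infty)$, $$\min\Big\{\inf_{a\in[0,\widehat a]}S_{p,q}(a),\ \inf_{a\in[\widehat a,1)}A_{p,q}(a)\Big\}\ \le\ R_{p,q}(\mathbb C)\ \le\ \min\Big\{\frac1{\sqrt2},\ \inf_{a\in[\widehat a,1)}A_{p,q}(a)\Big\}.$$
   Context: For $a\in[0,1)$: $A_{p,q}(a)=\frac{(1-a^p)^{1/q}}{1-a^2+a(1-a^p)^{1/q}}$, $S_{p,q}(a)=\big(\frac{(1-a^p)^{2/q}}{1-a^2+(1-a^p)^{2/q}}\big)^{1/2}$, and $\widehat a$ is the unique root in $(0,1)$ of $x^p+x^q=1$. For a holomorphic $f(z)=\sum_{k\ge0}a_kz^k$ from $\mathbb D$ into the closed unit disk, $R_{p,q}(f,\mathbb C)=\sup\{r\ge0: |a_0|^p+(\sum_{k\ge1}|a_k|r^k)^q\le1\}$ and $R_{p,q}(\mathbb C)$ is the infimum of $R_{p,q}(f,\mathbb C)$ over all such $f$. *)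

theory Defs
  imports "HOL-Complex_Analysis.Complex_Analysis" "HOL-Library.Extended_Real"
begin

definition A_pq :: "real \<Rightarrow> real \<Rightarrow> real \<Rightarrow> real" where
  "A_pq p q a = (1 - a powr p) powr (1/q) / (1 - a^2 + a * (1 - a powr p) powr (1/q))"

definition S_pq :: "real \<Rightarrow> real \<Rightarrow> real \<Rightarrow> real" where
  "S_pq p q a = sqrt ((1 - a powr p) powr (2/q) / (1 - a^2 + (1 - a powr p) powr (2/q)))"

definition ahat :: "real \<Rightarrow> real \<Rightarrow> real" where
  "ahat p q = (THE x. 0 < x \<and> x < 1 \<and> x powr p + x powr q = 1)"

definition taylor_coeff :: "(complex \<Rightarrow> complex) \<Rightarrow> nat \<Rightarrow> complex" where
  "taylor_coeff f k = (deriv ^^ k) f 0 / of_nat (fact k)"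

text \<open>admissible radii: the series of |a_k| r^k (k>=1) converges and the inequality holds
  (a divergent series counts as +infinity, so the inequality fails)\<close>
definition Rpq_ok :: "real \<Rightarrow> real \<Rightarrow> (complex \<Rightarrow> complex) \<Rightarrow> real \<Rightarrow> bool" where
  "Rpq_ok p q f r \<longleftrightarrow> 0 \<le> r \<and>
     summable (\<lambda>k. cmod (taylor_coeff f (Suc k)) * r ^ Suc k) \<and>
     cmod (taylor_coeff f 0) powr p
       + (\<Sum>k. cmod (taylor_coeff f (Suc k)) * r ^ Suc k) powr q \<le> 1"

definition Rpq_f :: "real \<Rightarrow> real \<Rightarrow> (complex \<Rightarrow> complex) \<Rightarrow> ereal" where
  "Rpq_f p q f = (SUP r\<in>{r. Rpq_ok p q f r}. ereal r)"

definition Rpq_C :: "real \<Rightarrow> real \<Rightarrow> ereal" where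
  "Rpq_C p q = (INF f\<in>{f. f holomorphic_on ball 0 1 \<and> (\<forall>z\<in>ball 0 1. cmod (f z) \<le> 1)}.
      Rpq_f p q f)"

end

theory Submission
  imports Defs
begin


lemma taylor_coeff_unique:
  fixes b :: "nat \<Rightarrow> complex"
  assumes "\<And>z. norm z < 1 \<Longrightarrow> (\<lambda>k. b k * z ^ k) sums f z"
  shows "taylor_coeff f k = b k"
proof -
  define F where "F = Abs_fps b"
  have rad: "fps_conv_radius F \<ge> 1"
    unfolding fps_conv_radius_def F_def fps_nth_Abs_fps
  proof (rule conv_radius_geI_ex')
    fix r :: real assume "0 < r" "ereal r < 1"
    then have "norm (of_real r :: complex) < 1" by auto
    from sums_summable[OF assms[OF this]] show "summable (\<lambda>n. b n * of_real r ^ n)" .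
  qed
  then have pos: "fps_conv_radius F > 0" by (metis less_le_trans zero_less_one ereal_less(2) one_ereal_def)
  have ev: "eventually (\<lambda>z. eval_fps F z = f z) (nhds 0)"
  proof -
    have "eventually (\<lambda>z::complex. z \<in> ball 0 1) (nhds 0)"
      by (intro eventually_nhds_in_open) auto
    then show ?thesis
    proof eventually_elim
      case (elim z)
      then have "norm z < 1" by auto
      then show ?case unfolding eval_fps_def F_def fps_nth_Abs_fps
        using assms sums_unique by metis
    qed
  qed
  have "b k = fps_nth F k" by (simp add: F_def)
  also have "\<dots> = (deriv ^^ k) (eval_fps F) 0 / fact k" by (rule fps_nth_conv_deriv[OF pos])
  also have "(deriv ^^ k) (eval_fps F) 0 = (deriv ^^ k) f 0"
    by (intro higher_deriv_cong_ev refl ev)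
  finally show ?thesis by (simp add: taylor_coeff_def)
qed

lemma taylor_sums:
  assumes "f holomorphic_on ball 0 1" "norm z < 1"
  shows "(\<lambda>k. taylor_coeff f k * z ^ k) sums f z"
  using holomorphic_power_series[OF assms(1), of z] assms(2)
  by (simp add: taylor_coeff_def)



lemma orth:
  fixes k l :: nat
  shows "((\<lambda>\<theta>. cis \<theta> ^ k * cnj (cis \<theta> ^ l)) has_integral (if k = l then 2*pi else 0)) {0..2*pi}"
proof (cases "k = l")
  case True
  have "cis \<theta> ^ k * cnj (cis \<theta> ^ l) = 1" for \<theta>
    using True by (simp add: cis_cnj cis_mult flip: power_mult_distrib)
  then show ?thesis using True has_integral_const_real[of "1::complex" 0 "2*pi"]
    by (simp add: scaleR_conv_of_real)
next
  case False
  define a where "a = \<i> * (of_int (int k - int l) :: complex)"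
  have a0: "a \<noteq> 0" using False by (simp add: a_def)
  have eq: "cis \<theta> ^ k * cnj (cis \<theta> ^ l) = exp (a * complex_of_real \<theta>)" for \<theta>
  proof -
    have "cis \<theta> ^ k * cnj (cis \<theta> ^ l) = cis (real k * \<theta> + - (real l * \<theta>))"
      by (simp only: DeMoivre complex_cnj_power cis_cnj Complex.DeMoivre cis_mult mult_minus_right)
    also have "\<dots> = exp (\<i> * complex_of_real (real k * \<theta> + - (real l * \<theta>)))"
      by (simp add: cis_conv_exp)
    also have "\<dots> = exp (a * complex_of_real \<theta>)"
      by (simp add: a_def algebra_simps)
    finally show ?thesis .
  qed
  have int: "(\<lambda>t. exp (a * complex_of_real t)) integrable_on {0..2*pi}"
    by (intro integrable_continuous_interval continuous_intros)
  have "exp (a * complex_of_real (2*pi)) = 1"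
  proof -
    have "a * complex_of_real (2*pi) = (2 * of_int (int k - int l) * pi) * \<i>"
      by (simp add: a_def algebra_simps)
    moreover have "exp ((2 * of_int (int k - int l) * pi) * \<i>) = 1"
      by (rule exp_integer_2pi) simp
    ultimately show ?thesis by metis
  qed
  then have "integral {0..2*pi} (\<lambda>t. exp (a * complex_of_real t)) = 0"
    using integral_exp[of "2*pi" a] a0 by simp
  then show ?thesis using False eq integrable_integral[OF int] by simp
qed

lemma parseval:
  fixes b :: "nat \<Rightarrow> complex" and g :: "real \<Rightarrow> complex"
  assumes sb: "summable (\<lambda>k. norm (b k))"
    and sg: "\<And>\<theta>. (\<lambda>k. b k * cis \<theta> ^ k) sums g \<theta>"
    and cg: "continuous_on {0..2*pi} g"
  shows "((\<lambda>\<theta>. (norm (g \<theta>))^2) has_integral (2*pi * (\<Sum>k. (norm (b k))^2))) {0..2*pi}"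
proof -
  define P where "P n \<theta> = (\<Sum>k<n. b k * cis \<theta> ^ k)" for n \<theta>
  define S where "S = (\<Sum>k. norm (b k))"
  define T where "T n = (\<Sum>k. norm (b (k + n)))" for n
  have "T = (\<lambda>n. \<Sum>k. norm (b (k + n)))" by (rule ext) (simp add: T_def)
  then have T0: "T \<longlonglongrightarrow> 0" using suminf_exist_split2[OF sb] by simp
  have sbn: "summable (\<lambda>k. norm (b (k + n)))" for n
    using summable_ignore_initial_segment[OF sb, of n] by simp
  have Tnn: "T n \<ge> 0" for n unfolding T_def by (intro suminf_nonneg sbn) simp
  have nP: "norm (P n \<theta>) \<le> S" for n \<theta>
  proof -
    have "norm (P n \<theta>) \<le> (\<Sum>k<n. norm (b k * cis \<theta> ^ k))"
      unfolding P_def by (rule norm_sum)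
    also have "\<dots> = (\<Sum>k<n. norm (b k))" by (simp add: norm_mult norm_power)
    also have "\<dots> \<le> S" unfolding S_def by (intro sum_le_suminf sb) auto
    finally show ?thesis .
  qed
  have ng: "norm (g \<theta>) \<le> S" for \<theta>
  proof -
    have "g \<theta> = (\<Sum>k. b k * cis \<theta> ^ k)" using sg sums_unique by metis
    also have "norm \<dots> \<le> S" unfolding S_def
      by (intro norm_suminf_le sb) (simp add: norm_mult norm_power)
    finally show ?thesis .
  qed
  have diff: "norm (g \<theta> - P n \<theta>) \<le> T n" for n \<theta>
  proof -
    have "(\<lambda>i. b (i + n) * cis \<theta> ^ (i + n)) sums (g \<theta> - P n \<theta>)"
      unfolding P_def by (rule sums_split_initial_segment[OF sg])
    then have "g \<theta> - P n \<theta> = (\<Sum>i. b (i + n) * cis \<theta> ^ (i + n))" using sums_unique by metis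
    also have "norm \<dots> \<le> T n" unfolding T_def
      by (intro norm_suminf_le sbn) (simp add: norm_mult norm_power)
    finally show ?thesis .
  qed
  have sq: "\<bar>norm (g \<theta>)^2 - norm (P n \<theta>)^2\<bar> \<le> 2 * S * T n" for n \<theta>
  proof -
    have "\<bar>norm (g \<theta>)^2 - norm (P n \<theta>)^2\<bar> = \<bar>norm (g \<theta>) - norm (P n \<theta>)\<bar> * (norm (g \<theta>) + norm (P n \<theta>))"
    proof -
      have e: "norm (g \<theta>)^2 - norm (P n \<theta>)^2 = (norm (g \<theta>) - norm (P n \<theta>)) * (norm (g \<theta>) + norm (P n \<theta>))"
        by (simp add: power2_eq_square algebra_simps)
      show ?thesis unfolding e abs_mult by simp
    qed
    also have "\<dots> \<le> T n * (2 * S)"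
      using norm_triangle_ineq3[of "g \<theta>" "P n \<theta>"] diff[of \<theta> n] ng[of \<theta>] nP[of n \<theta>]
      by (intro mult_mono) auto
    finally show ?thesis by (simp add: algebra_simps)
  qed
  have intP: "((\<lambda>\<theta>. norm (P n \<theta>)^2) has_integral (2*pi * (\<Sum>k<n. norm (b k)^2))) {0..2*pi}" for n
  proof -
    have eq: "complex_of_real (norm (P n \<theta>)^2) =
        (\<Sum>k<n. \<Sum>l<n. b k * cnj (b l) * (cis \<theta> ^ k * cnj (cis \<theta> ^ l)))" for \<theta>
    proof -
      have "complex_of_real (norm (P n \<theta>)^2) = P n \<theta> * cnj (P n \<theta>)"
        by (rule complex_norm_square)
      also have "\<dots> = (\<Sum>k<n. \<Sum>l<n. b k * cnj (b l) * (cis \<theta> ^ k * cnj (cis \<theta> ^ l)))"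
        unfolding P_def by (simp add: sum_distrib_left sum_distrib_right algebra_simps) (rule sum.swap)
      finally show ?thesis .
    qed
    have "((\<lambda>\<theta>. \<Sum>k<n. \<Sum>l<n. b k * cnj (b l) * (cis \<theta> ^ k * cnj (cis \<theta> ^ l))) has_integral
        (\<Sum>k<n. \<Sum>l<n. b k * cnj (b l) * (if k = l then 2*pi else 0))) {0..2*pi}"
      by (intro has_integral_sum finite_lessThan has_integral_mult_right orth)
    also have "(\<Sum>k<n. \<Sum>l<n. b k * cnj (b l) * (if k = l then 2*pi else 0)) =
        (\<Sum>k<n. b k * cnj (b k) * (2*pi))"
      by (simp add: if_distrib cong: if_cong)
    also have "\<dots> = (\<Sum>k<n. complex_of_real (2*pi * norm (b k)^2))"
    proof (intro sum.cong refl)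
      fix k
      have "b k * cnj (b k) = complex_of_real (norm (b k)^2)" by (rule complex_norm_square[symmetric])
      then show "b k * cnj (b k) * (2*pi) = complex_of_real (2*pi * norm (b k)^2)" by simp
    qed
    also have "\<dots> = complex_of_real (2*pi * (\<Sum>k<n. norm (b k)^2))"
      by (simp add: sum_distrib_left)
    finally have "((\<lambda>\<theta>. complex_of_real (norm (P n \<theta>)^2)) has_integral
        complex_of_real (2*pi * (\<Sum>k<n. norm (b k)^2))) {0..2*pi}"
      by (simp only: eq)
    from has_integral_linear[OF this bounded_linear_Re] show ?thesis by (simp add: o_def)
  qed
  have intg: "(\<lambda>\<theta>. norm (g \<theta>)^2) integrable_on {0..2*pi}"
    by (intro integrable_continuous_interval continuous_intros cg)
  define I where "I = integral {0..2*pi} (\<lambda>\<theta>. norm (g \<theta>)^2)"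
  have bound: "norm (I - 2*pi * (\<Sum>k<n. norm (b k)^2)) \<le> 2*pi * (2 * S * T n)" for n
  proof -
    have "I - 2*pi * (\<Sum>k<n. norm (b k)^2) = integral {0..2*pi} (\<lambda>\<theta>. norm (g \<theta>)^2 - norm (P n \<theta>)^2)"
      unfolding I_def using integral_diff[OF intg has_integral_integrable[OF intP[of n]]]
        integral_unique[OF intP[of n]] by simp
    also have "norm \<dots> \<le> integral {0..2*pi} (\<lambda>\<theta>. 2 * S * T n)"
      by (intro integral_norm_bound_integral integrable_diff intg
          has_integral_integrable[OF intP[of n]] integrable_const_ivl) (use sq in auto)
    also have "\<dots> = 2*pi * (2 * S * T n)" by simp
    finally show ?thesis .
  qed
  have "(\<lambda>n. I - 2*pi * (\<Sum>k<n. norm (b k)^2)) \<longlonglongrightarrow> 0"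
  proof (rule Lim_null_comparison)
    show "\<forall>\<^sub>F n in sequentially. norm (I - 2*pi * (\<Sum>k<n. norm (b k)^2)) \<le> 2*pi * (2 * S * T n)"
      using bound by simp
    show "(\<lambda>n. 2*pi * (2 * S * T n)) \<longlonglongrightarrow> 0"
      by (intro tendsto_mult_right_zero T0)
  qed
  then have "(\<lambda>n. I - (I - 2*pi * (\<Sum>k<n. norm (b k)^2))) \<longlonglongrightarrow> I - 0"
    by (intro tendsto_diff tendsto_const)
  then have "(\<lambda>n. (2*pi * (\<Sum>k<n. norm (b k)^2)) / (2*pi)) \<longlonglongrightarrow> I / (2*pi)"
    by (intro tendsto_divide tendsto_const) auto
  then have "(\<lambda>k. norm (b k)^2) sums (I / (2*pi))"
    unfolding sums_def by simp
  then have "(\<Sum>k. norm (b k)^2) = I / (2*pi)" by (rule sums_unique[symmetric])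
  then have "I = 2*pi * (\<Sum>k. norm (b k)^2)" by simp
  with intg show ?thesis unfolding I_def using integrable_integral by metis
qed



lemma mob_ident:
  fixes \<alpha> w :: complex
  shows "(norm (1 - cnj \<alpha> * w))^2 - (norm (w - \<alpha>))^2 = (1 - (norm \<alpha>)^2) * (1 - (norm w)^2)"
  by (simp only: cmod_power2) (simp add: algebra_simps power2_eq_square)

lemma mob_le:
  fixes \<alpha> w :: complex
  assumes "norm w \<le> 1" "norm \<alpha> \<le> 1"
  shows "norm (w - \<alpha>) \<le> norm (1 - cnj \<alpha> * w)"
proof -
  have "(1 - (norm \<alpha>)^2) * (1 - (norm w)^2) \<ge> 0"
    using assms by (intro mult_nonneg_nonneg) (auto simp: power_le_one)
  then have "(norm (w - \<alpha>))^2 \<le> (norm (1 - cnj \<alpha> * w))^2" using mob_ident[of \<alpha> w] by linarith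
  then show ?thesis by (rule power2_le_imp_le) simp
qed

lemma schwarz_mob:
  assumes holf: "f holomorphic_on ball 0 1" and bnd: "\<And>z. norm z < 1 \<Longrightarrow> norm (f z) \<le> 1"
    and a1: "norm (f 0) < 1" and z: "norm z < 1"
  shows "norm (f z - f 0) \<le> norm z * norm (1 - cnj (f 0) * f z)"
proof -
  define \<alpha> where "\<alpha> = f 0"
  have den: "1 - cnj \<alpha> * f w \<noteq> 0" if "norm w < 1" for w
  proof
    assume "1 - cnj \<alpha> * f w = 0"
    then have "1 = norm (cnj \<alpha> * f w)" by (metis eq_iff_diff_eq_0 norm_one)
    also have "\<dots> \<le> norm \<alpha> * 1" unfolding norm_mult complex_mod_cnj
      using bnd[OF that] by (intro mult_left_mono) auto
    finally show False using a1 by (simp add: \<alpha>_def)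
  qed
  define h where "h w = (f w - \<alpha>) / (1 - cnj \<alpha> * f w)" for w
  have holh: "h holomorphic_on ball 0 1"
    unfolding h_def using den by (intro holomorphic_intros holf) auto
  have h0: "h 0 = 0" by (simp add: h_def \<alpha>_def)
  have hle: "norm (h w) \<le> 1" if "norm w < 1" for w
  proof -
    have "norm (f w - \<alpha>) \<le> norm (1 - cnj \<alpha> * f w)"
      using bnd[OF that] a1 by (intro mob_le) (auto simp: \<alpha>_def)
    then show ?thesis using den[OF that] by (simp add: h_def norm_divide divide_le_eq_1)
  qed
  have "norm (h z) \<le> norm z"
  proof (rule field_le_mult_one_interval)
    fix s :: real assume s: "0 < s" "s < 1"
    have "norm ((\<lambda>w. of_real s * h w) z) \<le> norm z"
    proof (rule Schwarz_Lemma(1))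
      show "(\<lambda>w. of_real s * h w) holomorphic_on ball 0 1" by (intro holomorphic_intros holh)
      show "of_real s * h 0 = 0" by (simp add: h0)
      show "norm (of_real s * h w) < 1" if "norm w < 1" for w
        using hle[OF that] s by (simp add: norm_mult) (smt (verit) mult_left_le)
    qed (use z in auto)
    then show "s * norm (h z) \<le> norm z" using s by (simp add: norm_mult)
  qed
  then have "norm (h z) * norm (1 - cnj \<alpha> * f z) \<le> norm z * norm (1 - cnj \<alpha> * f z)"
    by (intro mult_right_mono) auto
  then show ?thesis using den[OF z] by (simp add: h_def norm_divide \<alpha>_def)
qed



lemma summable_norm_sq:
  fixes b :: "nat \<Rightarrow> complex"
  assumes "summable (\<lambda>k. norm (b k))"
  shows "summable (\<lambda>k. (norm (b k))^2)"
proof -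
  have "(\<lambda>k. norm (b k)) \<longlonglongrightarrow> 0" using summable_LIMSEQ_zero[OF assms] .
  then have "eventually (\<lambda>k. norm (b k) < 1) sequentially"
    using order_tendstoD(2)[OF \<open>(\<lambda>k. norm (b k)) \<longlonglongrightarrow> 0\<close>, of 1] by simp
  then have "eventually (\<lambda>k. norm ((norm (b k))^2) \<le> norm (b k)) sequentially"
    by eventually_elim (simp add: power2_eq_square mult_le_cancel_right1 less_imp_le mult_left_le_one_le)
  then show ?thesis by (rule summable_comparison_test_ev) (rule assms)
qed

lemma taylor0: "taylor_coeff f 0 = f 0"
  by (simp add: taylor_coeff_def)

lemma coeff_abs_summable:
  assumes holf: "f holomorphic_on ball 0 1" and "0 \<le> \<rho>" "\<rho> < 1"
  shows "summable (\<lambda>k. cmod (taylor_coeff f k) * \<rho>^k)"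
proof -
  define R where "R = (1 + \<rho>) / 2"
  have R: "\<rho> < R" "R < 1" using assms by (auto simp: R_def)
  have "summable (\<lambda>k. taylor_coeff f k * complex_of_real R ^ k)"
    using taylor_sums[OF holf, of "of_real R"] R assms sums_summable by auto
  from powser_insidea[OF this, of "of_real \<rho>"] R assms
  show ?thesis by (simp add: norm_mult norm_power)
qed

lemma key_Y:
  assumes holf: "f holomorphic_on ball 0 1" and bnd: "\<forall>z\<in>ball 0 1. cmod (f z) \<le> 1"
    and \<rho>: "0 \<le> \<rho>" "\<rho> < 1"
  shows "summable (\<lambda>k. (cmod (taylor_coeff f (Suc k)))^2 * (\<rho>^2)^(Suc k))"
    and "(\<Sum>k. (cmod (taylor_coeff f (Suc k)))^2 * (\<rho>^2)^(Suc k)) * (1 - (cmod (taylor_coeff f 0))^2 * \<rho>^2)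
           \<le> \<rho>^2 * (1 - (cmod (taylor_coeff f 0))^2)^2"
proof -
  define c where "c = taylor_coeff f"
  have c0: "c 0 = f 0" by (simp add: c_def taylor0)
  define a where "a = cmod (c 0)"
  have bnd': "cmod (f z) \<le> 1" if "norm z < 1" for z using bnd that by auto
  have a1: "a \<le> 1" using bnd'[of 0] by (simp add: a_def c0)
  have a0: "0 \<le> a" by (simp add: a_def)
  have csum: "summable (\<lambda>k. cmod (c k) * \<rho>^k)"
    unfolding c_def by (rule coeff_abs_summable[OF holf \<rho>])
  define d where "d k = (if k = 0 then 0 else c k)" for k
  define b where "b k = d k * of_real \<rho> ^ k" for k
  have nb: "norm (b k) \<le> cmod (c k) * \<rho>^k" for k
    using \<rho> by (simp add: b_def d_def norm_mult norm_power)
  have bsum: "summable (\<lambda>k. norm (b k))"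
    by (rule summable_comparison_test[OF _ csum]) (use nb in auto)
  have bsq: "summable (\<lambda>k. (norm (b k))^2)" by (rule summable_norm_sq[OF bsum])
  define z where "z \<theta> = complex_of_real \<rho> * cis \<theta>" for \<theta>
  have nz: "norm (z \<theta>) = \<rho>" for \<theta> using \<rho> by (simp add: z_def norm_mult)
  have zs: "(\<lambda>k. c k * z \<theta> ^ k) sums f (z \<theta>)" for \<theta>
    unfolding c_def by (rule taylor_sums[OF holf]) (use nz \<rho> in auto)
  have contf: "continuous_on {0..2*pi} (\<lambda>\<theta>. f (z \<theta>))"
  proof (rule continuous_on_compose2[of "ball 0 1" f])
    show "continuous_on (ball 0 1) f" using holf by (rule holomorphic_on_imp_continuous_on)
    show "continuous_on {0..2*pi} z" unfolding z_def by (intro continuous_intros)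
    show "z ` {0..2*pi} \<subseteq> ball 0 1" using nz \<rho> by auto
  qed
  have sg: "(\<lambda>k. b k * cis \<theta> ^ k) sums (f (z \<theta>) - c 0)" for \<theta>
  proof -
    have "(\<lambda>k. c k * z \<theta> ^ k - (if k = 0 then c k * z \<theta> ^ k else 0)) sums (f (z \<theta>) - c 0 * z \<theta> ^ 0)"
      by (intro sums_diff zs sums_single)
    moreover have "(\<lambda>k. c k * z \<theta> ^ k - (if k = 0 then c k * z \<theta> ^ k else 0)) = (\<lambda>k. b k * cis \<theta> ^ k)"
      by (auto simp: b_def d_def z_def power_mult_distrib)
    ultimately show ?thesis by simp
  qed
  have P1: "((\<lambda>\<theta>. (norm (f (z \<theta>) - c 0))^2) has_integral (2*pi * (\<Sum>k. (norm (b k))^2))) {0..2*pi}"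
    by (rule parseval[OF bsum sg]) (intro continuous_intros contf)
  define Y where "Y = (\<Sum>k. (norm (b k))^2)"
  have Y0: "Y \<ge> 0" unfolding Y_def by (intro suminf_nonneg bsq) simp
  have main: "Y * (1 - a^2 * \<rho>^2) \<le> \<rho>^2 * (1 - a^2)^2"
  proof (cases "a < 1")
    case True
    define e where "e k = (if k = 0 then 1 else 0) - cnj (c 0) * c k" for k
    define b2 where "b2 k = e k * of_real \<rho> ^ k" for k
    have nb2: "norm (b2 k) \<le> (if k = 0 then 1 else 0) + a * (cmod (c k) * \<rho>^k)" for k
    proof -
      have "norm (b2 k) = norm (e k) * \<rho>^k" using \<rho> by (simp add: b2_def norm_mult norm_power)
      also have "\<dots> \<le> (norm (if k = 0 then 1 else (0::complex)) + norm (cnj (c 0) * c k)) * \<rho>^k"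
        unfolding e_def using \<rho> by (intro mult_right_mono norm_triangle_ineq4) auto
      also have "\<dots> \<le> (if k = 0 then 1 else 0) + a * (cmod (c k) * \<rho>^k)"
        using \<rho> by (auto simp: a_def norm_mult)
      finally show ?thesis .
    qed
    have b2sum: "summable (\<lambda>k. norm (b2 k))"
    proof (rule summable_comparison_test[OF _ summable_add[OF summable_single[of 0 "\<lambda>_. 1::real"] summable_mult[OF csum, of a]]])
      show "\<exists>N. \<forall>n\<ge>N. norm (norm (b2 n)) \<le> (if n = 0 then 1 else 0) + a * (cmod (c n) * \<rho> ^ n)"
        using nb2 by auto
    qed
    have sg2: "(\<lambda>k. b2 k * cis \<theta> ^ k) sums (1 - cnj (c 0) * f (z \<theta>))" for \<theta>
    proof -
      have "(\<lambda>k. (if k = 0 then 1 else 0) + (- cnj (c 0)) * (c k * z \<theta> ^ k)) sums (1 + (- cnj (c 0)) * f (z \<theta>))"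
        by (intro sums_add sums_mult zs) (use sums_single[of 0 "\<lambda>_. 1::complex"] in simp)
      moreover have "(\<lambda>k. (if k = 0 then 1 else 0) + (- cnj (c 0)) * (c k * z \<theta> ^ k)) = (\<lambda>k. b2 k * cis \<theta> ^ k)"
        by (auto simp: b2_def e_def z_def power_mult_distrib)
      ultimately show ?thesis by simp
    qed
    have P2: "((\<lambda>\<theta>. (norm (1 - cnj (c 0) * f (z \<theta>)))^2) has_integral (2*pi * (\<Sum>k. (norm (b2 k))^2))) {0..2*pi}"
      by (rule parseval[OF b2sum sg2]) (intro continuous_intros contf)
    have nb2sq: "(norm (b2 k))^2 = (if k = 0 then (1 - a^2)^2 else 0) + a^2 * (norm (b k))^2" for k
    proof (cases "k = 0")
      case True
      have "cnj (c 0) * c 0 = complex_of_real (a^2)"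
        unfolding a_def by (subst complex_norm_square) (rule mult.commute)
      then have "b2 0 = complex_of_real (1 - a^2)" by (simp add: b2_def e_def)
      then have "norm (b2 0) = \<bar>1 - a^2\<bar>" by (simp only: norm_of_real)
      then have "norm (b2 0) = 1 - a^2" using a1 a0 by (simp add: power_le_one)
      then show ?thesis using True by (simp add: b_def d_def)
    next
      case False
      then show ?thesis
        by (simp add: b2_def e_def b_def d_def norm_mult norm_power a_def power_mult_distrib)
    qed
    have S2: "(\<Sum>k. (norm (b2 k))^2) = (1 - a^2)^2 + a^2 * Y"
    proof -
      have "(\<lambda>k. (if k = 0 then (1 - a^2)^2 else 0) + a^2 * (norm (b k))^2) sums ((1 - a^2)^2 + a^2 * Y)"
        unfolding Y_def
        by (intro sums_add sums_mult summable_sums bsq) (use sums_single[of 0 "\<lambda>_. (1 - a^2)^2"] in simp)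
      then show ?thesis by (simp add: nb2sq sums_unique[symmetric])
    qed
    have pw: "(norm (f (z \<theta>) - c 0))^2 \<le> \<rho>^2 * (norm (1 - cnj (c 0) * f (z \<theta>)))^2" for \<theta>
    proof -
      have "norm (f (z \<theta>) - f 0) \<le> norm (z \<theta>) * norm (1 - cnj (f 0) * f (z \<theta>))"
        by (rule schwarz_mob[OF holf bnd']) (use True \<rho> nz in \<open>auto simp: a_def c0\<close>)
      then have "norm (f (z \<theta>) - c 0) \<le> \<rho> * norm (1 - cnj (c 0) * f (z \<theta>))"
        by (simp add: nz c0)
      then show ?thesis by (metis norm_ge_zero power_mono power_mult_distrib)
    qed
    have "2*pi * Y \<le> \<rho>^2 * (2*pi * ((1 - a^2)^2 + a^2 * Y))"
      using has_integral_le[OF P1 has_integral_mult_right[OF P2, of "\<rho>^2"]] pw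
      unfolding Y_def[symmetric] S2 by simp
    then have "(2*pi) * Y \<le> (2*pi) * (\<rho>^2 * ((1 - a^2)^2 + a^2 * Y))" by (simp add: algebra_simps)
    then have "Y \<le> \<rho>^2 * ((1 - a^2)^2 + a^2 * Y)" by (rule mult_left_le_imp_le) simp
    then show ?thesis by (simp add: algebra_simps)
  next
    case False
    then have a1': "a = 1" using a1 by simp
    define b3 where "b3 k = c k * of_real \<rho> ^ k" for k
    have b3sum: "summable (\<lambda>k. norm (b3 k))"
      using csum \<rho> by (simp add: b3_def norm_mult norm_power)
    have sg3: "(\<lambda>k. b3 k * cis \<theta> ^ k) sums f (z \<theta>)" for \<theta>
      using zs[of \<theta>] by (simp add: b3_def z_def power_mult_distrib mult.assoc)
    have P3: "((\<lambda>\<theta>. (norm (f (z \<theta>)))^2) has_integral (2*pi * (\<Sum>k. (norm (b3 k))^2))) {0..2*pi}"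
      by (rule parseval[OF b3sum sg3]) (intro continuous_intros contf)
    have nb3sq: "(norm (b3 k))^2 = (if k = 0 then a^2 else 0) + (norm (b k))^2" for k
      by (simp add: b3_def b_def d_def a_def)
    have S3: "(\<Sum>k. (norm (b3 k))^2) = a^2 + Y"
    proof -
      have "(\<lambda>k. (if k = 0 then a^2 else 0) + (norm (b k))^2) sums (a^2 + Y)"
        unfolding Y_def
        by (intro sums_add summable_sums bsq) (use sums_single[of 0 "\<lambda>_. a^2"] in simp)
      then show ?thesis by (simp add: nb3sq sums_unique[symmetric])
    qed
    have pw: "(norm (f (z \<theta>)))^2 \<le> 1" for \<theta>
      using bnd'[of "z \<theta>"] nz \<rho> by (simp add: power_le_one)
    have "2*pi * (a^2 + Y) \<le> 2*pi"
      using has_integral_le[OF P3 has_integral_const_real[of 1 0 "2*pi"]] pw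
      unfolding S3 by simp
    then have "Y \<le> 0" using a1' by simp
    then show ?thesis using a1' Y0 \<rho> by simp
  qed
  have Yeq: "Y = (\<Sum>k. (cmod (c (Suc k)))^2 * (\<rho>^2)^(Suc k))"
  proof -
    have "(\<Sum>k. (norm (b (Suc k)))^2) = Y - (norm (b 0))^2"
      unfolding Y_def by (rule suminf_split_head[OF bsq])
    moreover have "(norm (b (Suc k)))^2 = (cmod (c (Suc k)))^2 * (\<rho>^2)^(Suc k)" for k
      using \<rho> by (simp add: b_def d_def norm_mult norm_power power_mult_distrib mult.commute flip: power_mult)
    ultimately show ?thesis by (simp add: b_def d_def)
  qed
  have "summable (\<lambda>k. (norm (b (Suc k)))^2)"
    using bsq by (subst summable_Suc_iff)
  moreover have "(norm (b (Suc k)))^2 = (cmod (c (Suc k)))^2 * (\<rho>^2)^(Suc k)" for k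
    using \<rho> by (simp add: b_def d_def norm_mult norm_power power_mult_distrib mult.commute flip: power_mult)
  ultimately show "summable (\<lambda>k. (cmod (taylor_coeff f (Suc k)))^2 * (\<rho>^2)^(Suc k))"
    by (simp add: c_def)
  show "(\<Sum>k. (cmod (taylor_coeff f (Suc k)))^2 * (\<rho>^2)^(Suc k)) * (1 - (cmod (taylor_coeff f 0))^2 * \<rho>^2)
           \<le> \<rho>^2 * (1 - (cmod (taylor_coeff f 0))^2)^2"
    using main unfolding Yeq a_def c_def .
qed



lemma amgm_sum:
  fixes u v :: "nat \<Rightarrow> real"
  assumes u: "\<And>k. 0 \<le> u k" and v: "\<And>k. 0 \<le> v k"
    and su: "summable (\<lambda>k. (u k)^2)" and sv: "summable (\<lambda>k. (v k)^2)" and l: "0 < l"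
  shows "summable (\<lambda>k. u k * v k)"
    and "(\<Sum>k. u k * v k) \<le> (l * (\<Sum>k. (u k)^2) + (\<Sum>k. (v k)^2) / l) / 2"
proof -
  have pt: "u k * v k \<le> (l * (u k)^2 + (v k)^2 / l) / 2" for k
  proof -
    have "0 \<le> (l * u k - v k)^2 / l" using l by simp
    also have "(l * u k - v k)^2 / l = l * (u k)^2 + (v k)^2 / l - 2 * (u k * v k)"
      using l by (simp add: power2_eq_square field_simps)
    finally show ?thesis by simp
  qed
  have s2: "summable (\<lambda>k. (l * (u k)^2 + (v k)^2 / l) / 2)"
    by (intro summable_divide summable_add summable_mult su sv)
  show sm: "summable (\<lambda>k. u k * v k)"
    by (rule summable_comparison_test[OF _ s2]) (use pt u v in auto)
  have "(\<Sum>k. u k * v k) \<le> (\<Sum>k. (l * (u k)^2 + (v k)^2 / l) / 2)"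
    by (intro suminf_le pt sm s2)
  also have "\<dots> = (l * (\<Sum>k. (u k)^2) + (\<Sum>k. (v k)^2) / l) / 2"
    by (intro sums_unique[symmetric] sums_divide sums_add sums_mult summable_sums su sv)
  finally show "(\<Sum>k. u k * v k) \<le> (l * (\<Sum>k. (u k)^2) + (\<Sum>k. (v k)^2) / l) / 2" .
qed

lemma geom_Suc:
  fixes q :: real
  assumes "0 \<le> q" "q < 1"
  shows "(\<lambda>k. q^(Suc k)) sums (q / (1 - q))"
proof -
  have "(\<lambda>k. q * q^k) sums (q * (1 / (1 - q)))"
    by (intro sums_mult geometric_sums) (use assms in auto)
  then show ?thesis by simp
qed

lemma bound_A:
  assumes holf: "f holomorphic_on ball 0 1" and bnd: "\<forall>z\<in>ball 0 1. cmod (f z) \<le> 1"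
    and a_def: "a = cmod (taylor_coeff f 0)" and r: "0 < r" "r < a" and a1: "a < 1"
  shows "(\<Sum>k. cmod (taylor_coeff f (Suc k)) * r^(Suc k)) \<le> r * (1 - a^2) / (1 - a * r)"
proof -
  define c where "c = taylor_coeff f"
  define t where "t = r / a"
  define \<rho> where "\<rho> = sqrt t"
  have a0: "0 < a" using r by simp
  have t: "0 < t" "t < 1" using r a0 by (auto simp: t_def)
  have \<rho>: "0 < \<rho>" "\<rho> < 1" "\<rho>^2 = t" using t by (auto simp: \<rho>_def)
  have Ysum: "summable (\<lambda>k. (cmod (c (Suc k)))^2 * (\<rho>^2)^(Suc k))"
    using key_Y(1)[OF holf bnd, of \<rho>] \<rho> by (simp add: c_def)
  have Yb: "(\<Sum>k. (cmod (c (Suc k)))^2 * (\<rho>^2)^(Suc k)) * (1 - a^2 * \<rho>^2) \<le> \<rho>^2 * (1 - a^2)^2"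
    using key_Y(2)[OF holf bnd, of \<rho>] \<rho> by (simp add: c_def a_def)
  define Y where "Y = (\<Sum>k. (cmod (c (Suc k)))^2 * t^(Suc k))"
  have at: "a^2 * t = a * r" using a0 by (simp add: t_def power2_eq_square)
  have ar: "a * r < 1" using r a1 a0 by (smt (verit) mult_less_cancel_left2)
  have Yb': "Y \<le> t * (1 - a^2)^2 / (1 - a * r)"
    using Yb ar by (simp add: Y_def \<rho> at pos_le_divide_eq)
  have pwc: "(x^m)^n = (x^n)^m" for x :: real and m n by (metis power_mult mult.commute)
  define u where "u k = cmod (c (Suc k)) * \<rho>^(Suc k)" for k
  define v where "v k = (r / \<rho>)^(Suc k)" for k
  have usq: "(u k)^2 = (cmod (c (Suc k)))^2 * t^(Suc k)" for k
    unfolding u_def power_mult_distrib pwc[of \<rho> "Suc k" 2] \<rho>(3) ..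
  have q: "(r / \<rho>)^2 = a * r" using a0 r \<rho> by (simp add: power_divide t_def power2_eq_square)
  have vsq: "(v k)^2 = (a * r)^(Suc k)" for k
    unfolding v_def pwc[of "r / \<rho>" "Suc k" 2] q ..
  have uv: "u k * v k = cmod (c (Suc k)) * r^(Suc k)" for k
    using \<rho> by (simp add: u_def v_def power_divide)
  have su: "summable (\<lambda>k. (u k)^2)" using Ysum by (simp add: usq \<rho>)
  have V: "(\<lambda>k. (v k)^2) sums (a * r / (1 - a * r))"
    unfolding vsq by (rule geom_Suc) (use a0 r ar in auto)
  define l where "l = a / (1 - a^2)"
  have l: "0 < l" using a0 a1 by (simp add: l_def power_less_one_iff abs_square_less_1)
  have "(\<Sum>k. u k * v k) \<le> (l * (\<Sum>k. (u k)^2) + (\<Sum>k. (v k)^2) / l) / 2"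
    by (rule amgm_sum(2)) (use su V l \<rho> r in \<open>auto simp: u_def v_def sums_iff\<close>)
  also have "(\<Sum>k. (u k)^2) = Y" by (simp add: usq Y_def)
  also have "(\<Sum>k. (v k)^2) = a * r / (1 - a * r)" using V by (simp add: sums_iff)
  also have "(l * Y + a * r / (1 - a * r) / l) / 2 \<le> (l * (t * (1 - a^2)^2 / (1 - a * r)) + a * r / (1 - a * r) / l) / 2"
  proof -
    have "l * Y \<le> l * (t * (1 - a^2)^2 / (1 - a * r))" using Yb' l by (intro mult_left_mono) auto
    then show ?thesis by (intro divide_right_mono add_right_mono) auto
  qed
  also have "\<dots> = r * (1 - a^2) / (1 - a * r)"
  proof -
    have "1 - a^2 > 0" using a0 a1 by (simp add: power_less_one_iff abs_square_less_1)
    moreover have "1 - a * r > 0" using ar by simp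
    ultimately have D: "1 - a^2 \<noteq> 0" "1 - a * r \<noteq> 0" by auto
    have e1: "a / D * (r / a * D^2 / E) = r * D / E" if "D \<noteq> 0" "E \<noteq> 0" for D E
      using that a0 by (simp add: field_simps power2_eq_square)
    have e2: "a * r / E / (a / D) = r * D / E" if "D \<noteq> 0" "E \<noteq> 0" for D E
      using that a0 by (simp add: field_simps)
    have h2: "(X + X) / 2 = X" for X :: real by simp
    show ?thesis unfolding l_def t_def e1[OF D] e2[OF D] by (rule h2)
  qed
  finally show ?thesis by (simp add: uv c_def)
qed

lemma partial_bound:
  assumes holf: "f holomorphic_on ball 0 1" and bnd: "\<forall>z\<in>ball 0 1. cmod (f z) \<le> 1"
    and a_def: "a = cmod (taylor_coeff f 0)" and a1: "a < 1" and \<rho>: "0 \<le> \<rho>" "\<rho> < 1"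
  shows "(\<Sum>k<n. (cmod (taylor_coeff f (Suc k)))^2 * (\<rho>^2)^(Suc k)) \<le> 1 - a^2"
proof -
  define c where "c = taylor_coeff f"
  have a0: "0 \<le> a" by (simp add: a_def)
  define Y where "Y = (\<Sum>k. (cmod (c (Suc k)))^2 * (\<rho>^2)^(Suc k))"
  have sY: "summable (\<lambda>k. (cmod (c (Suc k)))^2 * (\<rho>^2)^(Suc k))"
    unfolding c_def by (rule key_Y(1)[OF holf bnd \<rho>])
  have Yb: "Y * (1 - a^2 * \<rho>^2) \<le> \<rho>^2 * (1 - a^2)^2"
    unfolding Y_def c_def a_def by (rule key_Y(2)[OF holf bnd \<rho>])
  have r2: "\<rho>^2 \<le> 1" "0 \<le> \<rho>^2" using \<rho> by (auto simp: power_le_one)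
  have a2: "a^2 < 1" "0 \<le> a^2" using a0 a1 by (auto simp: power_less_one_iff abs_square_less_1)
  have "a^2 * \<rho>^2 \<le> a^2" using r2 a2 by (intro mult_left_le) auto
  then have pos: "0 < 1 - a^2 * \<rho>^2" using a2 by linarith
  have "\<rho>^2 * (1 - a^2) \<le> 1 - a^2 * \<rho>^2"
  proof -
    have "\<rho>^2 * (1 - a^2) - (1 - a^2 * \<rho>^2) = \<rho>^2 - 1" by (simp add: algebra_simps)
    then show ?thesis using r2 by linarith
  qed
  then have "(1 - a^2) * (\<rho>^2 * (1 - a^2)) \<le> (1 - a^2) * (1 - a^2 * \<rho>^2)"
    using a2 by (intro mult_left_mono) auto
  moreover have "(1 - a^2) * (\<rho>^2 * (1 - a^2)) = \<rho>^2 * (1 - a^2)^2"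
    by (simp add: power2_eq_square)
  ultimately have "Y * (1 - a^2 * \<rho>^2) \<le> (1 - a^2) * (1 - a^2 * \<rho>^2)" using Yb by linarith
  then have "Y \<le> 1 - a^2" using pos by (rule mult_right_le_imp_le)
  moreover have "(\<Sum>k<n. (cmod (c (Suc k)))^2 * (\<rho>^2)^(Suc k)) \<le> Y"
    unfolding Y_def by (rule sum_le_suminf[OF sY]) (use \<rho> in auto)
  ultimately show ?thesis by (simp add: c_def)
qed

lemma coeff_sq_bound:
  assumes holf: "f holomorphic_on ball 0 1" and bnd: "\<forall>z\<in>ball 0 1. cmod (f z) \<le> 1"
    and a_def: "a = cmod (taylor_coeff f 0)" and a1: "a < 1"
  shows "summable (\<lambda>k. (cmod (taylor_coeff f (Suc k)))^2)"
    and "(\<Sum>k. (cmod (taylor_coeff f (Suc k)))^2) \<le> 1 - a^2"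
proof -
  define c where "c = taylor_coeff f"
  have a0: "0 \<le> a" by (simp add: a_def)
  have part: "(\<Sum>k<n. (cmod (c (Suc k)))^2) \<le> 1 - a^2" for n
  proof (rule tendsto_le[OF trivial_limit_at_left_real])
    have "((\<lambda>\<rho>. \<Sum>k<n. (cmod (c (Suc k)))^2 * (\<rho>^2)^(Suc k)) \<longlongrightarrow> (\<Sum>k<n. (cmod (c (Suc k)))^2 * (1^2)^(Suc k))) (at_left 1)"
      by (intro tendsto_intros)
    then show "((\<lambda>\<rho>. \<Sum>k<n. (cmod (c (Suc k)))^2 * (\<rho>^2)^(Suc k)) \<longlongrightarrow> (\<Sum>k<n. (cmod (c (Suc k)))^2)) (at_left 1)"
      by simp
    show "((\<lambda>\<rho>. 1 - a^2) \<longlongrightarrow> 1 - a^2) (at_left (1::real))" by simp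
    have "eventually (\<lambda>\<rho>::real. \<rho> \<in> {0<..<1}) (at_left 1)"
      by (rule eventually_at_left_real) simp
    then show "eventually (\<lambda>\<rho>. (\<Sum>k<n. (cmod (c (Suc k)))^2 * (\<rho>^2)^(Suc k)) \<le> 1 - a^2) (at_left 1)"
      by eventually_elim (use partial_bound[OF holf bnd a_def a1] in \<open>auto simp: c_def\<close>)
  qed
  show sm: "summable (\<lambda>k. (cmod (taylor_coeff f (Suc k)))^2)"
    using part by (intro summableI_nonneg_bounded[where x = "1 - a^2"]) (auto simp: c_def)
  show "(\<Sum>k. (cmod (taylor_coeff f (Suc k)))^2) \<le> 1 - a^2"
    using part by (intro suminf_le_const sm) (simp add: c_def)
qed

lemma bound_S:
  assumes holf: "f holomorphic_on ball 0 1" and bnd: "\<forall>z\<in>ball 0 1. cmod (f z) \<le> 1"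
    and a_def: "a = cmod (taylor_coeff f 0)" and a1: "a < 1" and r: "0 \<le> r" "r < 1"
  shows "(\<Sum>k. cmod (taylor_coeff f (Suc k)) * r^(Suc k)) \<le> r * sqrt (1 - a^2) / sqrt (1 - r^2)"
proof (cases "r = 0")
  case True
  then show ?thesis by simp
next
  case False
  then have r0: "0 < r" using r by simp
  define c where "c = taylor_coeff f"
  have a0: "0 \<le> a" by (simp add: a_def)
  have a2: "a^2 < 1" using a0 a1 by (simp add: power_less_one_iff abs_square_less_1)
  have r2: "r^2 < 1" using r by (simp add: power_less_one_iff abs_square_less_1)
  have su: "summable (\<lambda>k. (cmod (c (Suc k)))^2)" and U: "(\<Sum>k. (cmod (c (Suc k)))^2) \<le> 1 - a^2"
    using coeff_sq_bound[OF holf bnd a_def a1] by (auto simp: c_def)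
  have pwc: "(x^m)^n = (x^n)^m" for x :: real and m n by (metis power_mult mult.commute)
  have V: "(\<lambda>k. (r^(Suc k))^2) sums (r^2 / (1 - r^2))"
    unfolding pwc[of r _ 2] by (rule geom_Suc) (use r2 in auto)
  define s1 where "s1 = sqrt (1 - a^2)"
  define s2 where "s2 = sqrt (1 - r^2)"
  have s1: "0 < s1" "s1^2 = 1 - a^2" using a2 by (auto simp: s1_def)
  have s2: "0 < s2" "s2^2 = 1 - r^2" using r2 by (auto simp: s2_def)
  define l where "l = r / (s2 * s1)"
  have l: "0 < l" using s1 s2 r0 by (simp add: l_def)
  have "(\<Sum>k. cmod (c (Suc k)) * r^(Suc k)) \<le> (l * (\<Sum>k. (cmod (c (Suc k)))^2) + (\<Sum>k. (r^(Suc k))^2) / l) / 2"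
    by (rule amgm_sum(2)) (use su V l r in \<open>auto simp: sums_iff\<close>)
  also have "(\<Sum>k. (r^(Suc k))^2) = r^2 / (1 - r^2)" using V by (simp add: sums_iff)
  also have "(l * (\<Sum>k. (cmod (c (Suc k)))^2) + r^2 / (1 - r^2) / l) / 2 \<le> (l * (1 - a^2) + r^2 / (1 - r^2) / l) / 2"
  proof -
    have "l * (\<Sum>k. (cmod (c (Suc k)))^2) \<le> l * (1 - a^2)" using U l by (intro mult_left_mono) auto
    then show ?thesis by (intro divide_right_mono add_right_mono) auto
  qed
  also have "\<dots> = r * s1 / s2"
  proof -
    have e1: "r / (s2 * s1) * s1^2 = r * s1 / s2" using s1 s2 by (simp add: field_simps power2_eq_square)
    have e2: "r^2 / s2^2 / (r / (s2 * s1)) = r * s1 / s2" using s1 s2 r0 by (simp add: field_simps power2_eq_square)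
    have h2: "(X + X) / 2 = X" for X :: real by simp
    show ?thesis unfolding l_def s1(2)[symmetric] s2(2)[symmetric] e1 e2 by (rule h2)
  qed
  finally show ?thesis by (simp add: c_def s1_def s2_def)
qed



lemma hmono:
  fixes p q x y :: real
  assumes "0 < p" "0 < q" "0 \<le> x" "x < y"
  shows "x powr p + x powr q < y powr p + y powr q"
  using powr_less_mono2[OF assms(1,3,4)] powr_less_mono2[OF assms(2,3,4)] by simp

lemma ahat_ex:
  fixes p q :: real
  assumes "1 \<le> p" "1 \<le> q"
  shows "\<exists>!x. 0 < x \<and> x < 1 \<and> x powr p + x powr q = 1"
proof -
  have cont: "continuous_on {0..1} (\<lambda>x::real. x powr p + x powr q)"
    using assms by (intro continuous_intros continuous_on_powr') auto
  obtain x where x: "0 \<le> x" "x \<le> 1" "x powr p + x powr q = 1"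
    using IVT'[of "\<lambda>x::real. x powr p + x powr q" 0 1 1, OF _ _ _ cont] by auto
  have "x \<noteq> 0" using x by auto
  moreover have "x \<noteq> 1" using x by auto
  ultimately have ex: "0 < x \<and> x < 1 \<and> x powr p + x powr q = 1" using x by auto
  show ?thesis
  proof (rule ex1I[of _ x])
    show "0 < x \<and> x < 1 \<and> x powr p + x powr q = 1" by (rule ex)
    fix y assume y: "0 < y \<and> y < 1 \<and> y powr p + y powr q = 1"
    show "y = x"
    proof (rule ccontr)
      assume "y \<noteq> x"
      then consider "y < x" | "x < y" by linarith
      then show False
        using hmono[of p q y x] hmono[of p q x y] assms ex y by (cases; auto)
    qed
  qed
qed

lemma ahat_props:
  fixes p q :: real
  assumes "1 \<le> p" "1 \<le> q"
  shows "0 < ahat p q" "ahat p q < 1" "ahat p q powr p + ahat p q powr q = 1"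
  using theI'[OF ahat_ex[OF assms]] unfolding ahat_def by auto

lemma ok_zero:
  assumes "0 \<le> p" and "cmod (taylor_coeff f 0) \<le> 1"
  shows "Rpq_ok p q f 0"
  unfolding Rpq_ok_def using assms by (simp add: powr_le1)

lemma ok_intro:
  assumes q: "0 \<le> q" and holf: "f holomorphic_on ball 0 1" and r: "0 \<le> r" "r < 1"
    and C: "0 \<le> C" "C powr q = 1 - cmod (taylor_coeff f 0) powr p"
    and le: "(\<Sum>k. cmod (taylor_coeff f (Suc k)) * r^(Suc k)) \<le> C"
  shows "Rpq_ok p q f r"
proof -
  have sm: "summable (\<lambda>k. cmod (taylor_coeff f (Suc k)) * r^(Suc k))"
    using coeff_abs_summable[OF holf r] by (subst summable_Suc_iff)
  have nn: "0 \<le> (\<Sum>k. cmod (taylor_coeff f (Suc k)) * r^(Suc k))"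
    by (intro suminf_nonneg sm) (use r in auto)
  have "(\<Sum>k. cmod (taylor_coeff f (Suc k)) * r^(Suc k)) powr q \<le> C powr q"
    by (rule powr_mono2[OF q nn le])
  then show ?thesis unfolding Rpq_ok_def using r sm C by simp
qed

lemma a_one_coeffs:
  assumes holf: "f holomorphic_on ball 0 1" and bnd: "\<forall>z\<in>ball 0 1. cmod (f z) \<le> 1"
    and a1: "cmod (taylor_coeff f 0) = 1"
  shows "taylor_coeff f (Suc k) = 0"
proof -
  define \<rho> :: real where "\<rho> = 1/2"
  have \<rho>: "0 \<le> \<rho>" "\<rho> < 1" by (auto simp: \<rho>_def)
  have sY: "summable (\<lambda>k. (cmod (taylor_coeff f (Suc k)))^2 * (\<rho>^2)^(Suc k))"
    by (rule key_Y(1)[OF holf bnd \<rho>])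
  have "(\<Sum>k. (cmod (taylor_coeff f (Suc k)))^2 * (\<rho>^2)^(Suc k)) * (1 - 1 * \<rho>^2) \<le> \<rho>^2 * (1 - 1)^2"
    using key_Y(2)[OF holf bnd \<rho>] a1 by simp
  then have "(\<Sum>k. (cmod (taylor_coeff f (Suc k)))^2 * (\<rho>^2)^(Suc k)) * (3/4) \<le> 0"
    by (simp only: \<rho>_def) (simp add: power2_eq_square)
  then have "(\<Sum>k. (cmod (taylor_coeff f (Suc k)))^2 * (\<rho>^2)^(Suc k)) \<le> 0"
    by (simp add: mult_le_0_iff)
  moreover have "(\<Sum>k. (cmod (taylor_coeff f (Suc k)))^2 * (\<rho>^2)^(Suc k)) \<ge> 0"
    by (intro suminf_nonneg sY) (simp add: \<rho>_def)
  ultimately have "(\<Sum>k. (cmod (taylor_coeff f (Suc k)))^2 * (\<rho>^2)^(Suc k)) = 0" by linarith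
  then have "\<forall>k. (cmod (taylor_coeff f (Suc k)))^2 * (\<rho>^2)^(Suc k) = 0"
    by (subst (asm) suminf_eq_zero_iff[OF sY]) (auto simp: \<rho>_def)
  then show ?thesis by (auto simp: \<rho>_def)
qed

lemma ok_a_one:
  assumes holf: "f holomorphic_on ball 0 1" and bnd: "\<forall>z\<in>ball 0 1. cmod (f z) \<le> 1"
    and a1: "cmod (taylor_coeff f 0) = 1" and r: "0 \<le> r"
  shows "Rpq_ok p q f r"
  unfolding Rpq_ok_def using a_one_coeffs[OF holf bnd a1] a1 r by simp

lemma lower_f:
  fixes p q m :: real
  assumes p: "1 \<le> p" and q: "1 \<le> q"
    and holf: "f holomorphic_on ball 0 1" and bnd: "\<forall>z\<in>ball 0 1. cmod (f z) \<le> 1"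
    and m0: "0 \<le> m"
    and mS: "\<And>a. a \<in> {0..ahat p q} \<Longrightarrow> m \<le> S_pq p q a"
    and mA: "\<And>a. a \<in> {ahat p q..<1} \<Longrightarrow> m \<le> A_pq p q a"
  shows "Rpq_ok p q f m"
proof -
  define a where "a = cmod (taylor_coeff f 0)"
  have a0: "0 \<le> a" by (simp add: a_def)
  have a1: "a \<le> 1" using bnd by (auto simp: a_def taylor0)
  show ?thesis
  proof (cases "a = 1")
    case True
    then show ?thesis using ok_a_one[OF holf bnd _ m0] by (simp add: a_def)
  next
    case False
    then have a1': "a < 1" using a1 by simp
    have ap: "a powr p < 1" using powr_less_mono2[of p a 1] p a0 a1' by simp
    define x where "x = 1 - a powr p"
    have x: "0 < x" "x \<le> 1" using ap a0 by (auto simp: x_def)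
    define C where "C = x powr (1/q)"
    have C0: "0 < C" using x by (simp add: C_def)
    have Cq: "C powr q = 1 - a powr p"
      using x q by (simp add: C_def powr_powr x_def)
    have C2: "x powr (2/q) = C^2"
    proof -
      have "x powr (2/q) = (x powr (1/q)) powr 2" by (simp add: powr_powr)
      also have "\<dots> = C^2" using C0 by (simp add: C_def)
      finally show ?thesis .
    qed
    have a2: "a^2 < 1" using a0 a1' by (simp add: power_less_one_iff abs_square_less_1)
    show ?thesis
    proof (cases "a \<le> ahat p q")
      case True
      have "m \<le> S_pq p q a" using mS True a0 by auto
      also have "S_pq p q a = sqrt (C^2 / (1 - a^2 + C^2))"
        by (simp add: S_pq_def C2[unfolded x_def])
      finally have mS': "m \<le> sqrt (C^2 / (1 - a^2 + C^2))" .
      have den: "0 < 1 - a^2 + C^2" using a2 C0 by (smt (verit) zero_le_power2)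
      have mm: "m^2 \<le> C^2 / (1 - a^2 + C^2)"
        using mS' m0 by (metis real_sqrt_pow2 power_mono den divide_nonneg_pos zero_le_power2)
      then have mm': "m^2 * (1 - a^2 + C^2) \<le> C^2" using den by (simp add: pos_le_divide_eq)
      have m1: "m < 1"
      proof -
        have "C^2 < 1 - a^2 + C^2" using a2 by simp
        then have "m^2 * (1 - a^2 + C^2) < 1 * (1 - a^2 + C^2)" using mm' by simp
        then have "m^2 < 1" using den by simp
        then show ?thesis using m0 by (simp add: power_less_one_iff abs_square_less_1)
      qed
      have m2: "m^2 < 1" using m0 m1 by (simp add: power_less_one_iff abs_square_less_1)
      have "(\<Sum>k. cmod (taylor_coeff f (Suc k)) * m^(Suc k)) \<le> m * sqrt (1 - a^2) / sqrt (1 - m^2)"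
        by (rule bound_S[OF holf bnd a_def a1' m0 m1])
      also have "\<dots> \<le> C"
      proof -
        have "m^2 * (1 - a^2) \<le> C^2 * (1 - m^2)" using mm' by (simp add: algebra_simps)
        then have "sqrt (m^2 * (1 - a^2)) \<le> sqrt (C^2 * (1 - m^2))" by simp
        then have "m * sqrt (1 - a^2) \<le> C * sqrt (1 - m^2)"
          using m0 C0 by (simp add: real_sqrt_mult)
        then show ?thesis using m2 by (simp add: pos_divide_le_eq)
      qed
      finally show ?thesis
        by (intro ok_intro[OF _ holf m0 m1 _ _]) (use q C0 Cq in \<open>auto simp: a_def\<close>)
    next
      case False
      then have ah: "ahat p q < a" by simp
      have "ahat p q powr p + ahat p q powr q < a powr p + a powr q"
        using hmono[of p q "ahat p q" a] p q ah ahat_props[OF p q] by auto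
      then have "1 - a powr p < a powr q" using ahat_props(3)[OF p q] by simp
      then have "C powr q < a powr q" using Cq by simp
      then have Ca: "C < a" using powr_less_cancel2[of q C a] q C0 ah ahat_props(1)[OF p q] by auto
      have apos: "0 < a" using C0 Ca by simp
      have den: "0 < 1 - a^2 + a * C" using a2 apos C0 by (smt (verit) mult_pos_pos)
      have "m \<le> A_pq p q a" using mA ah a1' by auto
      also have "A_pq p q a = C / (1 - a^2 + a * C)"
        by (simp add: A_pq_def C_def x_def)
      finally have mA': "m * (1 - a^2 + a * C) \<le> C" using den by (simp add: pos_le_divide_eq)
      have ma: "m < a"
      proof (rule ccontr)
        assume "\<not> m < a"
        then have "a * (1 - a^2 + a * C) \<le> m * (1 - a^2 + a * C)" using den by (intro mult_right_mono) auto
        with mA' have "a * (1 - a^2 + a * C) \<le> C" by linarith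
        then have "a * (1 - a^2) \<le> C * (1 - a^2)" by (simp add: algebra_simps power2_eq_square)
        then have "a \<le> C" using a2 by simp
        with Ca show False by simp
      qed
      show ?thesis
      proof (cases "m = 0")
        case True
        then show ?thesis using ok_zero[of p f q] p a1 by (simp add: a_def)
      next
        case False
        then have mpos: "0 < m" using m0 by simp
        have m1: "m < 1" using ma a1' by simp
        have am: "a * m < 1" using a1' ma m0 apos by (smt (verit) mult_less_cancel_left2)
        have "(\<Sum>k. cmod (taylor_coeff f (Suc k)) * m^(Suc k)) \<le> m * (1 - a^2) / (1 - a * m)"
          by (rule bound_A[OF holf bnd a_def mpos ma a1'])
        also have "\<dots> \<le> C"
        proof -
          have "m * (1 - a^2) \<le> C * (1 - a * m)" using mA' by (simp add: algebra_simps)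
          then show ?thesis using am by (simp add: pos_divide_le_eq)
        qed
        finally show ?thesis
          by (intro ok_intro[OF _ holf m0 m1 _ _]) (use q C0 Cq in \<open>auto simp: a_def\<close>)
      qed
    qed
  qed
qed



definition phi :: "real \<Rightarrow> complex \<Rightarrow> complex" where
  "phi a z = (complex_of_real a - z) / (1 - complex_of_real a * z)"

definition phic :: "real \<Rightarrow> nat \<Rightarrow> complex" where
  "phic a k = (if k = 0 then complex_of_real a else - complex_of_real ((1 - a^2) * a^(k - 1)))"

lemma phi_den:
  assumes "0 \<le> a" "a < 1" "norm z < 1"
  shows "1 - complex_of_real a * z \<noteq> 0"
proof
  assume "1 - complex_of_real a * z = 0"
  then have "1 = norm (complex_of_real a * z)" by (metis eq_iff_diff_eq_0 norm_one)
  also have "\<dots> = a * norm z" using assms by (simp add: norm_mult)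
  also have "\<dots> \<le> norm z" using assms by (intro mult_left_le_one_le) auto
  also have "\<dots> < 1" using assms by simp
  finally show False by simp
qed

lemma phi_sums:
  assumes a: "0 \<le> a" "a < 1" and z: "norm z < 1"
  shows "(\<lambda>k. phic a k * z^k) sums phi a z"
proof -
  define w where "w = complex_of_real a * z"
  have "a * norm z \<le> norm z" using a by (intro mult_left_le_one_le) auto
  then have nw: "norm w < 1" using a z by (simp add: w_def norm_mult)
  have "(\<lambda>k. (- complex_of_real (1 - a^2) * z) * w^k) sums ((- complex_of_real (1 - a^2) * z) * (1 / (1 - w)))"
    by (intro sums_mult geometric_sums nw)
  moreover have "(\<lambda>k. phic a (Suc k) * z^(Suc k)) = (\<lambda>k. (- complex_of_real (1 - a^2) * z) * w^k)"
    by (rule ext) (simp add: phic_def w_def power_mult_distrib algebra_simps)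
  ultimately have "(\<lambda>k. phic a (Suc k) * z^(Suc k)) sums ((- complex_of_real (1 - a^2) * z) * (1 / (1 - w)))"
    by simp
  then have "(\<lambda>k. phic a k * z^k) sums ((- complex_of_real (1 - a^2) * z) * (1 / (1 - w)) + phic a 0 * z^0)"
    by (subst sums_Suc_iff[symmetric]) simp
  moreover have "(- complex_of_real (1 - a^2) * z) * (1 / (1 - w)) + phic a 0 * z^0 = phi a z"
  proof -
    have d: "1 - w \<noteq> 0" using phi_den[OF a z] by (simp add: w_def)
    have g: "X * (1 / D) + A = (A * D + X) / D" if "D \<noteq> 0" for X D A :: complex
      using that by (simp add: field_simps)
    have e: "complex_of_real a * (1 - w) + (- complex_of_real (1 - a^2) * z) = complex_of_real a - z"
    proof -
      have e0: "b * (1 - b * z) + (- (1 - b * b) * z) = b - z" for b :: complex by (simp add: algebra_simps)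
      have "complex_of_real (1 - a^2) = 1 - complex_of_real a * complex_of_real a" by (simp add: power2_eq_square)
      then show ?thesis unfolding w_def using e0[of "complex_of_real a"] by simp
    qed
    have "(- complex_of_real (1 - a^2) * z) * (1 / (1 - w)) + phic a 0 * z^0
        = (- complex_of_real (1 - a^2) * z) * (1 / (1 - w)) + complex_of_real a"
      by (simp add: phic_def)
    also have "\<dots> = (complex_of_real a * (1 - w) + (- complex_of_real (1 - a^2) * z)) / (1 - w)"
      by (rule g[OF d])
    also have "\<dots> = (complex_of_real a - z) / (1 - w)" by (simp only: e)
    also have "\<dots> = phi a z" by (simp add: phi_def w_def)
    finally show ?thesis .
  qed
  ultimately show ?thesis by simp
qed

lemma phi_holo: "0 \<le> a \<Longrightarrow> a < 1 \<Longrightarrow> phi a holomorphic_on ball 0 1"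
  unfolding phi_def using phi_den by (intro holomorphic_intros) auto

lemma phi_bnd:
  assumes "0 \<le> a" "a < 1" "norm z < 1"
  shows "cmod (phi a z) \<le> 1"
proof -
  have "norm (z - complex_of_real a) \<le> norm (1 - cnj (complex_of_real a) * z)"
    using assms by (intro mob_le) auto
  then have "norm (complex_of_real a - z) \<le> norm (1 - complex_of_real a * z)"
    by (simp add: norm_minus_commute)
  then show ?thesis using phi_den[OF assms] by (simp add: phi_def norm_divide divide_le_eq_1)
qed

lemma phi_coeff: "0 \<le> a \<Longrightarrow> a < 1 \<Longrightarrow> taylor_coeff (phi a) k = phic a k"
  by (rule taylor_coeff_unique) (rule phi_sums)

lemma excess:
  fixes \<beta> :: "nat \<Rightarrow> real"
  assumes \<beta>: "\<And>k. 0 \<le> \<beta> k" and r: "0 \<le> r0" "r0 < r"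
    and s0: "summable (\<lambda>k. \<beta> k * r0^Suc k)" and s1: "summable (\<lambda>k. \<beta> k * r^Suc k)"
  shows "(\<Sum>k. \<beta> k * r0^Suc k) + \<beta> 0 * (r - r0) \<le> (\<Sum>k. \<beta> k * r^Suc k)"
proof -
  have S: "(\<lambda>k. \<beta> k * r0^Suc k + (if k = 0 then \<beta> 0 * (r - r0) else 0)) sums ((\<Sum>k. \<beta> k * r0^Suc k) + \<beta> 0 * (r - r0))"
    by (intro sums_add summable_sums s0) (use sums_single[of 0 "\<lambda>_. \<beta> 0 * (r - r0)"] in simp)
  have T: "\<beta> k * r0^Suc k + (if k = 0 then \<beta> 0 * (r - r0) else 0) \<le> \<beta> k * r^Suc k" for k
  proof (cases "k = 0")
    case True then show ?thesis by (simp add: algebra_simps)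
  next
    case False
    have "r0^Suc k \<le> r^Suc k" using r by (intro power_mono) auto
    then have "\<beta> k * r0^Suc k \<le> \<beta> k * r^Suc k" using \<beta>[of k] by (rule mult_left_mono)
    then show ?thesis using False by simp
  qed
  show ?thesis by (rule sums_le[OF T S summable_sums[OF s1]])
qed



lemma phic_norm_Suc:
  assumes "0 \<le> a" "a \<le> 1" shows "cmod (phic a (Suc k)) = (1 - a^2) * a^k"
proof -
  have "phic a (Suc k) = - complex_of_real ((1 - a^2) * a^k)" by (simp add: phic_def)
  then have "cmod (phic a (Suc k)) = \<bar>(1 - a^2) * a^k\<bar>" by (simp only: norm_minus_cancel norm_of_real)
  moreover have "0 \<le> (1 - a^2) * a^k" using assms by (simp add: power_le_one)
  ultimately show ?thesis by simp
qed

lemma phi_upper: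
  fixes p q a r :: real
  assumes p: "1 \<le> p" and q: "1 \<le> q" and a: "0 \<le> a" "a < 1"
    and ok: "Rpq_ok p q (phi a) r"
  shows "r \<le> A_pq p q a"
proof (rule ccontr)
  assume "\<not> r \<le> A_pq p q a"
  then have rgt: "A_pq p q a < r" by simp
  define \<beta> where "\<beta> k = (1 - a^2) * a^k" for k
  have a2: "a^2 < 1" using a by (simp add: power_less_one_iff abs_square_less_1)
  have \<beta>0: "0 \<le> \<beta> k" for k using a a2 by (simp add: \<beta>_def)
  have cf: "cmod (taylor_coeff (phi a) (Suc k)) = \<beta> k" for k
    using a by (simp add: phi_coeff phic_norm_Suc \<beta>_def)
  have c0: "cmod (taylor_coeff (phi a) 0) = a" using a by (simp add: phi_coeff phic_def)
  have ap: "a powr p < 1" using powr_less_mono2[of p a 1] p a by simp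
  define x where "x = 1 - a powr p"
  have x: "0 < x" using ap by (simp add: x_def)
  define C where "C = x powr (1/q)"
  have C0: "0 < C" using x by (simp add: C_def)
  have Cq: "C powr q = 1 - a powr p" using x q by (simp add: C_def powr_powr x_def)
  define r0 where "r0 = C / (1 - a^2 + a * C)"
  have den: "0 < 1 - a^2 + a * C" using a2 a C0 by (smt (verit) mult_nonneg_nonneg)
  have r0eq: "r0 = A_pq p q a" by (simp add: r0_def A_pq_def C_def x_def)
  have r00: "0 \<le> r0" using den C0 by (simp add: r0_def)
  have ar0: "a * r0 < 1"
  proof -
    have "a * C < 1 - a^2 + a * C" using a2 by simp
    then have "a * C / (1 - a^2 + a * C) < 1" using den by simp
    then show ?thesis by (simp add: r0_def)
  qed
  have S0: "(\<lambda>k. \<beta> k * r0^Suc k) sums C"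
  proof -
    have "(\<lambda>k. ((1 - a^2) * r0) * (a * r0)^k) sums (((1 - a^2) * r0) * (1 / (1 - a * r0)))"
      by (intro sums_mult geometric_sums) (use ar0 a r00 in auto)
    moreover have "(\<lambda>k. ((1 - a^2) * r0) * (a * r0)^k) = (\<lambda>k. \<beta> k * r0^Suc k)"
      by (rule ext) (simp add: \<beta>_def power_mult_distrib)
    moreover have "((1 - a^2) * r0) * (1 / (1 - a * r0)) = C"
    proof -
      have g: "(D * (Cc / E)) * (1 / (1 - a * (Cc / E))) = Cc" if "E = D + a * Cc" "E \<noteq> 0" "D \<noteq> 0" for D Cc E :: real
      proof -
        have "1 - a * (Cc / E) = D / E" using that by (simp add: field_simps)
        then show ?thesis using that by simp
      qed
      show ?thesis unfolding r0_def by (rule g) (use den a2 in auto)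
    qed
    ultimately show ?thesis by simp
  qed
  have s1: "summable (\<lambda>k. \<beta> k * r^Suc k)" and le1: "a powr p + (\<Sum>k. \<beta> k * r^Suc k) powr q \<le> 1"
    using ok unfolding Rpq_ok_def cf c0 by auto
  have "C + \<beta> 0 * (r - r0) \<le> (\<Sum>k. \<beta> k * r^Suc k)"
    using excess[OF \<beta>0 r00 _ sums_summable[OF S0] s1] rgt r0eq sums_unique[OF S0] by simp
  moreover have "\<beta> 0 * (r - r0) > 0" using a2 rgt r0eq by (simp add: \<beta>_def)
  ultimately have "C < (\<Sum>k. \<beta> k * r^Suc k)" by linarith
  then have "C powr q < (\<Sum>k. \<beta> k * r^Suc k) powr q"
    using q C0 by (intro powr_less_mono2) auto
  with le1 Cq show False by simp
qed

definition psi :: "complex \<Rightarrow> complex" where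
  "psi z = z * phi (1 / sqrt 2) z"

definition psic :: "nat \<Rightarrow> complex" where
  "psic k = (if k = 0 then 0 else phic (1 / sqrt 2) (k - 1))"

lemma s_facts: "0 \<le> 1 / sqrt 2" "1 / sqrt 2 < (1::real)" "(1 / sqrt 2)^2 = (1/2::real)"
  by (auto simp: power_divide)

lemma psi_sums:
  assumes z: "norm z < 1"
  shows "(\<lambda>k. psic k * z^k) sums psi z"
proof -
  have "(\<lambda>k. z * (phic (1 / sqrt 2) k * z^k)) sums (z * phi (1 / sqrt 2) z)"
    by (intro sums_mult phi_sums z s_facts)
  moreover have "(\<lambda>k. z * (phic (1 / sqrt 2) k * z^k)) = (\<lambda>k. psic (Suc k) * z^(Suc k))"
    by (rule ext) (simp add: psic_def)
  ultimately have "(\<lambda>k. psic (Suc k) * z^(Suc k)) sums (z * phi (1 / sqrt 2) z)" by simp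
  then have "(\<lambda>k. psic k * z^k) sums (z * phi (1 / sqrt 2) z + psic 0 * z^0)"
    by (subst sums_Suc_iff[symmetric]) simp
  then show ?thesis by (simp add: psic_def psi_def)
qed

lemma psi_holo: "psi holomorphic_on ball 0 1"
  unfolding psi_def by (intro holomorphic_intros phi_holo s_facts)

lemma psi_bnd:
  assumes "norm z < 1" shows "cmod (psi z) \<le> 1"
proof -
  have "cmod (phi (1 / sqrt 2) z) \<le> 1" by (rule phi_bnd[OF s_facts(1,2) assms])
  then have "norm z * cmod (phi (1 / sqrt 2) z) \<le> 1 * 1"
    using assms by (intro mult_mono) auto
  then show ?thesis by (simp add: psi_def norm_mult)
qed

lemma psi_upper:
  fixes p q r :: real
  assumes p: "1 \<le> p" and q: "1 \<le> q" and ok: "Rpq_ok p q psi r"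
  shows "r \<le> 1 / sqrt 2"
proof (rule ccontr)
  define s :: real where "s = 1 / sqrt 2"
  assume "\<not> r \<le> 1 / sqrt 2"
  then have rgt: "s < r" by (simp add: s_def)
  have s: "0 < s" "s < 1" "s^2 = 1/2" using s_facts by (auto simp: s_def)
  have tc: "taylor_coeff psi k = psic k" for k
    by (rule taylor_coeff_unique) (rule psi_sums)
  define \<beta> where "\<beta> k = cmod (psic (Suc k))" for k
  have \<beta>0: "0 \<le> \<beta> k" for k by (simp add: \<beta>_def)
  have "psic (Suc 0) = complex_of_real s" by (simp add: psic_def phic_def s_def)
  then have b0: "\<beta> 0 = s" using s by (simp add: \<beta>_def)
  have bS: "\<beta> (Suc k) = (1/2) * s^k" for k
    using phic_norm_Suc[of s k] s by (simp add: \<beta>_def psic_def s_def)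
  have S0: "(\<lambda>k. \<beta> k * s^Suc k) sums 1"
  proof -
    have "(\<lambda>k. (1/4) * (1/2)^k) sums ((1/4) * (1 / (1 - 1/2)) :: real)"
      by (intro sums_mult geometric_sums) simp
    moreover have "(\<lambda>k. (1/4) * (1/2)^k) = (\<lambda>k. \<beta> (Suc k) * s^Suc (Suc k))"
    proof (rule ext)
      fix k
      have "\<beta> (Suc k) * s^Suc (Suc k) = (1/2) * (s^k * s^k) * s^2"
        by (simp add: bS power2_eq_square)
      also have "s^k * s^k = (s^2)^k" by (simp add: power2_eq_square power_mult_distrib)
      finally show "(1/4) * (1/2)^k = \<beta> (Suc k) * s^Suc (Suc k)" using s by simp
    qed
    ultimately have "(\<lambda>k. \<beta> (Suc k) * s^Suc (Suc k)) sums (1/2)" by simp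
    then have "(\<lambda>k. \<beta> k * s^Suc k) sums (1/2 + \<beta> 0 * s^Suc 0)"
      by (subst sums_Suc_iff[symmetric]) simp
    moreover have "1/2 + \<beta> 0 * s^Suc 0 = 1" using b0 s(3) by (simp add: power2_eq_square)
    ultimately show ?thesis by simp
  qed
  have s1: "summable (\<lambda>k. \<beta> k * r^Suc k)" and le1: "cmod (psic 0) powr p + (\<Sum>k. \<beta> k * r^Suc k) powr q \<le> 1"
    using ok unfolding Rpq_ok_def tc \<beta>_def by auto
  have "1 + \<beta> 0 * (r - s) \<le> (\<Sum>k. \<beta> k * r^Suc k)"
    using excess[OF \<beta>0 _ rgt sums_summable[OF S0] s1] s sums_unique[OF S0] by simp
  moreover have "\<beta> 0 * (r - s) > 0" using s rgt b0 by simp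
  ultimately have "1 < (\<Sum>k. \<beta> k * r^Suc k)" by linarith
  then have "1 powr q < (\<Sum>k. \<beta> k * r^Suc k) powr q"
    using q by (intro powr_less_mono2) auto
  with le1 show False by (simp add: psic_def)
qed



lemma ereal_le_Inf_real:
  fixes g :: "real \<Rightarrow> real" and x :: ereal
  assumes ne: "D \<noteq> {}" and nn: "\<And>a. a \<in> D \<Longrightarrow> 0 \<le> g a" and le: "\<And>a. a \<in> D \<Longrightarrow> x \<le> ereal (g a)"
  shows "x \<le> ereal (INF a\<in>D. g a)"
proof (cases x)
  case (real y)
  have "y \<le> (INF a\<in>D. g a)"
    by (rule cInf_greatest) (use ne le real in auto)
  then show ?thesis using real by simp
next
  case PInf
  from ne obtain a where "a \<in> D" by auto
  with le[of a] PInf show ?thesis by simp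
next
  case MInf
  then show ?thesis by simp
qed

theorem mainTheorem2:
  fixes p q :: real
  assumes "1 \<le> p" and "1 \<le> q"
  shows "min (ereal (INF a\<in>{0..ahat p q}. S_pq p q a)) (ereal (INF a\<in>{ahat p q..<1}. A_pq p q a))
           \<le> Rpq_C p q
       \<and> Rpq_C p q \<le> ereal (min (1 / sqrt 2) (INF a\<in>{ahat p q..<1}. A_pq p q a))"
proof -
  note p = assms(1) and q = assms(2)
  define X where "X = (INF a\<in>{0..ahat p q}. S_pq p q a)"
  define Z where "Z = (INF a\<in>{ahat p q..<1}. A_pq p q a)"
  have ah: "0 < ahat p q" "ahat p q < 1" using ahat_props[OF p q] by auto
  have Snn: "0 \<le> S_pq p q a" if "a \<in> {0..ahat p q}" for a
  proof -
    have a: "0 \<le> a" "a < 1" using that ah by auto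
    define C where "C = (1 - a powr p) powr (2/q)"
    have C0: "0 \<le> C" by (simp add: C_def)
    have a2: "a^2 < 1" using a by (simp add: power_less_one_iff abs_square_less_1)
    then have "0 \<le> C / (1 - a^2 + C)" using C0 by simp
    then show ?thesis by (simp add: S_pq_def C_def[symmetric])
  qed
  have Ann: "0 \<le> A_pq p q a" if "a \<in> {ahat p q..<1}" for a
  proof -
    have a: "0 \<le> a" "a < 1" using that ah by auto
    define C where "C = (1 - a powr p) powr (1/q)"
    have C0: "0 \<le> C" by (simp add: C_def)
    have a2: "a^2 < 1" using a by (simp add: power_less_one_iff abs_square_less_1)
    have "0 < 1 - a^2 + a * C" using a2 a C0 by (smt (verit) mult_nonneg_nonneg)
    then show ?thesis using C0 by (simp add: A_pq_def C_def[symmetric])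
  qed
  have ne1: "{0..ahat p q} \<noteq> {}" using ah by auto
  have ne2: "{ahat p q..<1} \<noteq> {}" using ah by auto
  have bdd1: "bdd_below (S_pq p q ` {0..ahat p q})" by (rule bdd_belowI[of _ 0]) (use Snn in auto)
  have bdd2: "bdd_below (A_pq p q ` {ahat p q..<1})" by (rule bdd_belowI[of _ 0]) (use Ann in auto)
  have X0: "0 \<le> X" unfolding X_def by (rule cInf_greatest) (use ne1 Snn in auto)
  have Z0: "0 \<le> Z" unfolding Z_def by (rule cInf_greatest) (use ne2 Ann in auto)
  have XS: "X \<le> S_pq p q a" if "a \<in> {0..ahat p q}" for a
    unfolding X_def by (rule cInf_lower) (use that bdd1 in auto)
  have ZA: "Z \<le> A_pq p q a" if "a \<in> {ahat p q..<1}" for a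
    unfolding Z_def by (rule cInf_lower) (use that bdd2 in auto)
  define m where "m = min X Z"
  have part1: "ereal m \<le> Rpq_C p q"
    unfolding Rpq_C_def
  proof (rule INF_greatest)
    fix f assume "f \<in> {f. f holomorphic_on ball 0 1 \<and> (\<forall>z\<in>ball 0 1. cmod (f z) \<le> 1)}"
    then have holf: "f holomorphic_on ball 0 1" and bnd: "\<forall>z\<in>ball 0 1. cmod (f z) \<le> 1" by auto
    have ok: "Rpq_ok p q f m"
    proof (rule lower_f[OF p q holf bnd])
      show "0 \<le> m" using X0 Z0 by (simp add: m_def)
      show "m \<le> S_pq p q a" if "a \<in> {0..ahat p q}" for a using XS[OF that] by (simp add: m_def)
      show "m \<le> A_pq p q a" if "a \<in> {ahat p q..<1}" for a using ZA[OF that] by (simp add: m_def)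
    qed
    show "ereal m \<le> Rpq_f p q f" unfolding Rpq_f_def
      by (rule SUP_upper) (use ok in simp)
  qed
  have inF: "psi \<in> {f. f holomorphic_on ball 0 1 \<and> (\<forall>z\<in>ball 0 1. cmod (f z) \<le> 1)}"
    using psi_holo psi_bnd by auto
  have inF2: "phi a \<in> {f. f holomorphic_on ball 0 1 \<and> (\<forall>z\<in>ball 0 1. cmod (f z) \<le> 1)}"
    if "0 \<le> a" "a < 1" for a
    using phi_holo[OF that] phi_bnd[OF that] by auto
  have R1: "Rpq_C p q \<le> ereal (1 / sqrt 2)"
  proof -
    have "Rpq_C p q \<le> Rpq_f p q psi" unfolding Rpq_C_def by (rule INF_lower[OF inF])
    also have "\<dots> \<le> ereal (1 / sqrt 2)" unfolding Rpq_f_def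
      by (rule SUP_least) (use psi_upper[OF p q] in auto)
    finally show ?thesis .
  qed
  have R2: "Rpq_C p q \<le> ereal Z"
    unfolding Z_def
  proof (rule ereal_le_Inf_real[OF ne2 Ann])
    fix a assume a: "a \<in> {ahat p q..<1}"
    then have a': "0 \<le> a" "a < 1" using ah by auto
    have "Rpq_C p q \<le> Rpq_f p q (phi a)" unfolding Rpq_C_def by (rule INF_lower[OF inF2[OF a']])
    also have "\<dots> \<le> ereal (A_pq p q a)" unfolding Rpq_f_def
      by (rule SUP_least) (use phi_upper[OF p q a'] in auto)
    finally show "Rpq_C p q \<le> ereal (A_pq p q a)" .
  qed (simp)
  have "min (ereal X) (ereal Z) = ereal m" by (simp add: m_def min_def)
  moreover have "ereal (min (1 / sqrt 2) Z) = min (ereal (1 / sqrt 2)) (ereal Z)" by (simp add: min_def)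
  ultimately show ?thesis using part1 R1 R2 unfolding X_def[symmetric] Z_def[symmetric] by simp
qed


end
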